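(* Let $p_t$, $t\in[0,1]$, be the marginals of the forward CTMC with rates $Q_t$ started from the data distribution $p_0$, and let $p^\theta_t$ be the marginals of the learned reverse process started at time $1$ from the reference distribution $p^\theta_1=p_r$. Then $$D_{KL}(p_0\,\|\,p_0^\theta)\le \int_0^1\mathbb{E}_{x_t\sim p_t}\sum_{y\neq x_t}Q_t(x_t,y)\,\ell\!\left(\frac{p_t(y)}{p_t(x_t)},\,s_\theta(x_t,t)_y\right)dt + D_{KL}(p_1\,\|\,p_r).$$
   Context: Finite state space $\mathcal{X}$; $(Q_t)_{t\in[0,1]}$ transition-rate matrices (nonnegative off-diagonal entries, columns summing to zero, $Q_t(x,y)$ for $x\ne y$ is the rate of jumping from $y$ to $x$). The forward process has marginals $p_t$ solving $\frac{d}{dt}p_t=Q_tp_t$ from the data distribution $p_0$. The true reverse process runs from $t=1$ to $t=0$, starts from $p_1$, and jumps from $x$ to $y\neq x$ at time $t$ with rate $Q_t(x,y)\,p_t(y)/p_t(x)$; its marginals are $p_t$. A model $s_\theta(x,t)_y>0$ ($x\ne y$) approximates the ratios $p_t(y)/p_t(x)$; the learned reverse process runs from $t=1$ to $t=0$, starts from a reference distribution $p_r$, and jumps from $x$ to $y\neq x$ at rate $Q_t(x,y)\,s_\theta(x,t)_y$; its marginals are denoted $p^\theta_t$ (so $p^\theta_1=p_r$, and $p^\theta_0$ is the learned data distribution). $K(a)=a(\log a-1)$ with $K(0)=0$, $\ell(a,b)=b-a\log b+K(a)$. All quantities are assumed regular enough for the integrals to be defined. *)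

theory Defs
  imports "HOL-Analysis.Analysis"
begin

definition Kfun :: "real \<Rightarrow> real" where
  "Kfun a = (if a = 0 then 0 else a * (ln a - 1))"

definition lfun :: "real \<Rightarrow> real \<Rightarrow> real" where
  "lfun a b = b - a * ln b + Kfun a"

definition KL :: "('x::finite \<Rightarrow> real) \<Rightarrow> ('x \<Rightarrow> real) \<Rightarrow> real" where
  "KL p q = (\<Sum>x\<in>UNIV. if p x = 0 then 0 else p x * ln (p x / q x))"

definition score_entropy_integrand ::
  "(real \<Rightarrow> 'x::finite \<Rightarrow> 'x \<Rightarrow> real) \<Rightarrow> (real \<Rightarrow> 'x \<Rightarrow> real)
     \<Rightarrow> ('x \<Rightarrow> real \<Rightarrow> 'x \<Rightarrow> real) \<Rightarrow> real \<Rightarrow> real" where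
  "score_entropy_integrand Q p s t =
     (\<Sum>x\<in>UNIV. p t x * (\<Sum>y\<in>UNIV - {x}. Q t x y * lfun (p t y / p t x) (s x t y)))"

end

theory Submission
  imports Defs
begin

lemma sum_minus_if: "finite A \<Longrightarrow> x \<in> A \<Longrightarrow> (\<Sum>y\<in>A - {x}. g y) = (\<Sum>y\<in>A. if y = x then 0 else g y)"
  by (simp add: sum.If_cases Diff_eq Int_commute[of A] flip: Compl_eq_Diff_UNIV)

definition DD :: "('x::finite \<Rightarrow> 'x \<Rightarrow> real) \<Rightarrow> real" where
  "DD E = (\<Sum>x\<in>UNIV. \<Sum>y\<in>UNIV. if y = x then 0 else E x y)"

lemma DD_add: "DD E + DD F = DD (\<lambda>x y. E x y + F x y)"
  unfolding DD_def by (simp add: sum.distrib[symmetric] if_distrib cong: if_cong)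

lemma DD_diff: "DD E - DD F = DD (\<lambda>x y. E x y - F x y)"
  unfolding DD_def by (simp add: sum_subtractf[symmetric]) (intro sum.cong, auto)

lemma DD_swap: "DD E = DD (\<lambda>x y. E y x)"
  unfolding DD_def by (subst sum.swap) (intro sum.cong, auto)

lemma DD_nonneg: "(\<And>x y. x \<noteq> y \<Longrightarrow> E x y \<ge> 0) \<Longrightarrow> DD E \<ge> 0"
  unfolding DD_def by (intro sum_nonneg) auto

lemma DD_row: "(\<Sum>x\<in>UNIV. \<Sum>y\<in>UNIV - {x}. E x y) = DD E"
  unfolding DD_def by (intro sum.cong refl sum_minus_if) auto
    
lemma key_ineq:
  fixes Q :: "'x::finite \<Rightarrow> 'x \<Rightarrow> real" and p q :: "'x \<Rightarrow> real" and s :: "'x \<Rightarrow> 'x \<Rightarrow> real"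
  assumes Qo: "\<And>x y. x \<noteq> y \<Longrightarrow> Q x y \<ge> 0"
    and Qc: "\<And>y. (\<Sum>x\<in>UNIV. Q x y) = 0"
    and pp: "\<And>x. p x > 0" and qp: "\<And>x. q x > 0"
    and sp: "\<And>x y. x \<noteq> y \<Longrightarrow> s x y > 0"
  defines "dp \<equiv> \<lambda>x. (\<Sum>y\<in>UNIV. Q x y * p y)"
  defines "dq \<equiv> \<lambda>x. - ((\<Sum>y\<in>UNIV - {x}. q y * (Q y x * s y x)) - q x * (\<Sum>y\<in>UNIV - {x}. Q x y * s x y))"
  shows "0 \<le> (\<Sum>x\<in>UNIV. dp x * (ln (p x) - ln (q x)) + p x * (dp x / p x - dq x / q x))
              + (\<Sum>x\<in>UNIV. p x * (\<Sum>y\<in>UNIV - {x}. Q x y * lfun (p y / p x) (s x y)))"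
proof -
  define L where "L x = ln (p x) - ln (q x)" for x
  have S2: "(\<Sum>x\<in>UNIV. p x * (dp x / p x)) = 0"
  proof -
    have "(\<Sum>x\<in>UNIV. p x * (dp x / p x)) = (\<Sum>x\<in>UNIV. dp x)"
      using pp by (intro sum.cong) (auto simp: less_imp_neq[symmetric])
    also have "\<dots> = (\<Sum>y\<in>UNIV. \<Sum>x\<in>UNIV. Q x y * p y)"
      unfolding dp_def by (rule sum.swap)
    also have "\<dots> = (\<Sum>y\<in>UNIV. (\<Sum>x\<in>UNIV. Q x y) * p y)"
      by (simp add: sum_distrib_right)
    finally show ?thesis using Qc by simp
  qed
  have S1: "(\<Sum>x\<in>UNIV. dp x * L x) = DD (\<lambda>x y. p y * Q x y * (L x - L y))"
  proof -
    have "(\<Sum>x\<in>UNIV. dp x * L x) = (\<Sum>x\<in>UNIV. \<Sum>y\<in>UNIV. Q x y * p y * L x)"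
      unfolding dp_def by (simp add: sum_distrib_right)
    also have "\<dots> = (\<Sum>y\<in>UNIV. \<Sum>x\<in>UNIV. Q x y * p y * L x)"
      by (rule sum.swap)
    also have "\<dots> = (\<Sum>y\<in>UNIV. \<Sum>x\<in>UNIV. Q x y * p y * (L x - L y))"
    proof (rule sum.cong[OF refl])
      fix y
      have "(\<Sum>x\<in>UNIV. Q x y * p y * L y) = 0"
        using Qc[of y] by (simp add: sum_distrib_right[symmetric])
      then show "(\<Sum>x\<in>UNIV. Q x y * p y * L x) = (\<Sum>x\<in>UNIV. Q x y * p y * (L x - L y))"
        by (simp add: right_diff_distrib sum_subtractf)
    qed
    also have "\<dots> = (\<Sum>y\<in>UNIV. \<Sum>x\<in>UNIV. if x = y then 0 else p y * Q x y * (L x - L y))"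
      by (intro sum.cong) auto
    also have "\<dots> = DD (\<lambda>x y. p y * Q x y * (L x - L y))"
      unfolding DD_def by (subst sum.swap) (intro sum.cong refl, auto)
    finally show ?thesis .
  qed
  have S3: "(\<Sum>x\<in>UNIV. p x * (dq x / q x)) =
     DD (\<lambda>x y. p x * Q x y * s x y) - DD (\<lambda>x y. p y / q y * q x * Q x y * s x y)"
  proof -
    have "(\<Sum>x\<in>UNIV. p x * (dq x / q x)) = (\<Sum>x\<in>UNIV. \<Sum>y\<in>UNIV - {x}. 
         p x * Q x y * s x y - p x / q x * q y * Q y x * s y x)"
    proof (rule sum.cong[OF refl])
      fix x
      have "p x * (dq x / q x) = p x * (\<Sum>y\<in>UNIV - {x}. Q x y * s x y) - p x / q x * (\<Sum>y\<in>UNIV - {x}. q y * (Q y x * s y x))"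
        unfolding dq_def using qp[of x] by (simp add: field_simps)
      also have "\<dots> = (\<Sum>y\<in>UNIV - {x}. p x * Q x y * s x y - p x / q x * q y * Q y x * s y x)"
        by (simp add: sum_distrib_left sum_subtractf mult.assoc)
      finally show "p x * (dq x / q x) = \<dots>" .
    qed
    also have "\<dots> = DD (\<lambda>x y. p x * Q x y * s x y) - DD (\<lambda>x y. p x / q x * q y * Q y x * s y x)"
      by (simp add: DD_row DD_diff)
    also have "DD (\<lambda>x y. p x / q x * q y * Q y x * s y x) = DD (\<lambda>x y. p y / q y * q x * Q x y * s x y)"
      by (rule DD_swap)
    finally show ?thesis .
  qed
  have S4: "(\<Sum>x\<in>UNIV. p x * (\<Sum>y\<in>UNIV - {x}. Q x y * lfun (p y / p x) (s x y)))
     = DD (\<lambda>x y. p x * (Q x y * lfun (p y / p x) (s x y)))"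
    by (simp add: sum_distrib_left DD_row)
  have "(\<Sum>x\<in>UNIV. dp x * (ln (p x) - ln (q x)) + p x * (dp x / p x - dq x / q x))
     = (\<Sum>x\<in>UNIV. dp x * L x) + (\<Sum>x\<in>UNIV. p x * (dp x / p x)) - (\<Sum>x\<in>UNIV. p x * (dq x / q x))"
    by (simp add: L_def sum.distrib sum_subtractf right_diff_distrib)
  also have "\<dots> = DD (\<lambda>x y. p y * Q x y * (L x - L y)) - 
     (DD (\<lambda>x y. p x * Q x y * s x y) - DD (\<lambda>x y. p y / q y * q x * Q x y * s x y))"
    by (simp only: S1 S2 S3)
  finally have eq: "(\<Sum>x\<in>UNIV. dp x * (ln (p x) - ln (q x)) + p x * (dp x / p x - dq x / q x))
              + (\<Sum>x\<in>UNIV. p x * (\<Sum>y\<in>UNIV - {x}. Q x y * lfun (p y / p x) (s x y)))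
     = DD (\<lambda>x y. p y * Q x y * (L x - L y) - (p x * Q x y * s x y - p y / q y * q x * Q x y * s x y)
            + p x * (Q x y * lfun (p y / p x) (s x y)))"
    by (simp add: S4 DD_add DD_diff)
  have "0 \<le> DD (\<lambda>x y. p y * Q x y * (L x - L y) - (p x * Q x y * s x y - p y / q y * q x * Q x y * s x y)
            + p x * (Q x y * lfun (p y / p x) (s x y)))"
  proof (rule DD_nonneg)
    fix x y :: 'x assume xy: "x \<noteq> y"
    define u where "u = q x * s x y / q y"
    have px: "p x > 0" and py: "p y > 0" and qx: "q x > 0" and qy: "q y > 0" and sxy: "s x y > 0"
      using pp qp sp xy by auto
    have u: "u > 0" unfolding u_def using qx qy sxy by simp
    have lnu: "ln (q x * s x y / q y) = ln (q x) + ln (s x y) - ln (q y)" using qx qy sxy by (simp add: ln_div ln_mult)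
    have lnp: "ln (p y / p x) = ln (p y) - ln (p x)" using px py by (simp add: ln_div)
    have "p y * Q x y * (L x - L y) - (p x * Q x y * s x y - p y / q y * q x * Q x y * s x y)
            + p x * (Q x y * lfun (p y / p x) (s x y)) = Q x y * p y * (u - 1 - ln u)"
      using px py qy unfolding lfun_def Kfun_def L_def u_def
      by (simp add: lnp lnu field_simps)
    also have "\<dots> \<ge> 0"
      using Qo[OF xy] py ln_le_minus_one[OF u] by simp
    finally show "0 \<le> p y * Q x y * (L x - L y) - (p x * Q x y * s x y - p y / q y * q x * Q x y * s x y)
            + p x * (Q x y * lfun (p y / p x) (s x y))" .
  qed
  then show ?thesis using eq by simp
qed

lemma bound_exists:
  fixes f :: "'x::finite \<Rightarrow> real \<Rightarrow> real"
  assumes "\<And>x. continuous_on {0..1} (f x)"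
  shows "\<exists>M\<ge>0. \<forall>x. \<forall>t\<in>{0..1}. f x t \<le> M"
proof -
  have "\<forall>x. \<exists>B>0. \<forall>t\<in>{0..1}. norm (f x t) \<le> B"
  proof
    fix x
    have "bounded (f x ` {0..1})"
      by (intro compact_imp_bounded compact_continuous_image assms) auto
    then show "\<exists>B>0. \<forall>t\<in>{0..1}. norm (f x t) \<le> B" by (auto simp: bounded_pos)
  qed
  then obtain B where B: "\<And>x. B x > 0" "\<And>x t. t \<in> {0..1} \<Longrightarrow> norm (f x t) \<le> B x"
    by metis
  show ?thesis
  proof (intro exI[of _ "\<Sum>x\<in>UNIV. B x"] conjI allI ballI)
    show "0 \<le> (\<Sum>x\<in>UNIV. B x)" using B(1) by (simp add: sum_nonneg less_imp_le)
    fix x t assume t: "t \<in> {0..(1::real)}"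
    have "f x t \<le> B x" using B(2)[OF t, of x] by simp
    also have "\<dots> \<le> (\<Sum>x\<in>UNIV. B x)" using B(1) by (intro member_le_sum) (auto simp: less_imp_le)
    finally show "f x t \<le> (\<Sum>x\<in>UNIV. B x)" .
  qed
qed

lemma ptheta_pos:
  fixes Q :: "real \<Rightarrow> 'x::finite \<Rightarrow> 'x \<Rightarrow> real"
    and p\<theta> :: "real \<Rightarrow> 'x \<Rightarrow> real"
    and s :: "'x \<Rightarrow> real \<Rightarrow> 'x \<Rightarrow> real"
    and pr :: "'x \<Rightarrow> real"
  assumes Q_offdiag: "\<And>t x y. t \<in> {0..1} \<Longrightarrow> x \<noteq> y \<Longrightarrow> Q t x y \<ge> 0"
    and Q_cont: "\<And>x y. continuous_on {0..1} (\<lambda>t. Q t x y)"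
    and s_pos: "\<And>x t y. t \<in> {0..1} \<Longrightarrow> x \<noteq> y \<Longrightarrow> s x t y > 0"
    and s_cont: "\<And>x y. continuous_on {0..1} (\<lambda>t. s x t y)"
    and pr_pos: "\<And>x. pr x > 0"
    and p\<theta>_init: "p\<theta> 1 = pr"
    and p\<theta>_ode: "\<And>t x. t \<in> {0..1} \<Longrightarrow>
        ((\<lambda>\<tau>. p\<theta> \<tau> x) has_real_derivative
           - ((\<Sum>y\<in>UNIV - {x}. p\<theta> t y * (Q t y x * s y t x))
              - p\<theta> t x * (\<Sum>y\<in>UNIV - {x}. Q t x y * s x t y)))
         (at t within {0..1})"
  shows "\<And>t x. t \<in> {0..1} \<Longrightarrow> p\<theta> t x > 0"
proof -
  define out where "out x t = (\<Sum>y\<in>UNIV - {x}. Q t x y * s x t y)" for x t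
  have "\<And>x. continuous_on {0..1} (out x)"
    unfolding out_def by (intro continuous_intros Q_cont s_cont)
  then obtain M where M: "M \<ge> 0" "\<And>x t. t \<in> {0..1} \<Longrightarrow> out x t \<le> M"
    using bound_exists[of out] by blast
  have out_nn: "out x t \<ge> 0" if "t \<in> {0..1}" for x t
    unfolding out_def using that by (intro sum_nonneg mult_nonneg_nonneg Q_offdiag less_imp_le[OF s_pos]) auto
  have cont: "continuous_on {0..1} (\<lambda>t. p\<theta> t x)" for x
    using p\<theta>_ode by (rule DERIV_continuous_on)
  define S where "S = (\<Union>x. {t \<in> {0..1}. p\<theta> t x \<le> 0})"
  have closedS: "closed S"
    unfolding S_def by (intro closed_UN ballI continuous_on_closed_Collect_le cont continuous_on_const) auto
  show "\<And>t x. t \<in> {0..1} \<Longrightarrow> p\<theta> t x > 0"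
  proof (rule ccontr)
    fix t x assume t: "t \<in> {0..(1::real)}" and nt: "\<not> p\<theta> t x > 0"
    then have "t \<in> S" unfolding S_def by (auto simp: not_less)
    then have Sne: "S \<noteq> {}" by auto
    have bdd: "bdd_above S" unfolding S_def by (rule bdd_aboveI[of _ 1]) auto
    define T where "T = Sup S"
    have TS: "T \<in> S" unfolding T_def using closed_contains_Sup[OF Sne bdd closedS] .
    have T01: "T \<in> {0..1}" using TS unfolding S_def by auto
    have T1: "T \<noteq> 1" using TS pr_pos unfolding S_def by (auto simp: p\<theta>_init not_le[symmetric])
    have after: "p\<theta> u y > 0" if "T < u" "u \<le> 1" for u y
    proof (rule ccontr)
      assume "\<not> p\<theta> u y > 0"
      then have "u \<in> S" using that T01 unfolding S_def by (auto simp: not_less)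
      then have "u \<le> T" unfolding T_def by (rule cSup_upper[OF _ bdd])
      then show False using that by simp
    qed
    have "p\<theta> T y > 0" for y
    proof -
      define g where "g u = p\<theta> u y * exp (- M * u)" for u
      have "g T \<ge> g 1"
      proof (rule DERIV_nonpos_imp_decreasing_open[of T 1 g])
        show "T \<le> 1" using T01 by simp
        show "continuous_on {T..1} g"
          unfolding g_def using T01
          by (intro continuous_intros continuous_on_subset[OF cont]) auto
        fix u assume u: "T < u" "u < 1"
        then have u01: "u \<in> {0..1}" using T01 by auto
        define D where "D = - ((\<Sum>z\<in>UNIV - {y}. p\<theta> u z * (Q u z y * s z u y)) - p\<theta> u y * out y u)"
        have dp: "((\<lambda>\<tau>. p\<theta> \<tau> y) has_real_derivative D) (at u)"
          using p\<theta>_ode[OF u01, of y] u T01 unfolding D_def out_def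
          by (simp add: at_within_Icc_at)
        have dg: "(g has_real_derivative (D * exp (- M * u) + p\<theta> u y * (exp (- M * u) * (- M)))) (at u)"
          unfolding g_def by (auto intro!: derivative_eq_intros dp)
        have in_nn: "(\<Sum>z\<in>UNIV - {y}. p\<theta> u z * (Q u z y * s z u y)) \<ge> 0"
          using u by (intro sum_nonneg mult_nonneg_nonneg less_imp_le[OF after] Q_offdiag[OF u01] less_imp_le[OF s_pos[OF u01]]) auto
        have "p\<theta> u y * out y u \<le> p\<theta> u y * M"
          using M(2)[OF u01, of y] after[of u y] u by (intro mult_left_mono) auto
        then have "D - p\<theta> u y * M \<le> 0"
          using in_nn unfolding D_def by linarith
        then have "exp (- M * u) * (D - p\<theta> u y * M) \<le> 0"
          by (intro mult_nonneg_nonpos) auto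
        then have "D * exp (- M * u) + p\<theta> u y * (exp (- M * u) * (- M)) \<le> 0"
          by (simp add: algebra_simps)
        with dg show "\<exists>y. (g has_real_derivative y) (at u) \<and> y \<le> 0" by blast
      qed
      moreover have "g 1 > 0" unfolding g_def p\<theta>_init using pr_pos by simp
      ultimately have "g T > 0" by simp
      then show ?thesis unfolding g_def by (simp add: zero_less_mult_iff)
    qed
    then show False using TS unfolding S_def by (auto simp: not_le[symmetric])
  qed
qed

lemma xlnx_lim: "((\<lambda>u::real. u * ln u) \<longlongrightarrow> 0) (at_right 0)"
proof -
  have "((\<lambda>x::real. - (ln x / x)) \<longlongrightarrow> 0) at_top"
    using tendsto_minus[OF ln_x_over_x_tendsto_0] by simp
  moreover have "eventually (\<lambda>x::real. - (ln x / x) = inverse x * ln (inverse x)) at_top"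
    by (simp add: ln_inverse divide_inverse)
  ultimately have "((\<lambda>x::real. inverse x * ln (inverse x)) \<longlongrightarrow> 0) at_top"
    by (rule Lim_transform_eventually)
  then show ?thesis by (simp add: filterlim_at_right_to_top)
qed

lemma xlnx_cont: "continuous_on {0..} (\<lambda>u::real. u * ln u)"
proof -
  have *: "continuous (at u within {0..}) (\<lambda>u::real. u * ln u)" if "u \<ge> 0" for u
  proof (cases "u = 0")
    case True
    show ?thesis unfolding continuous_within at_within_Ici_at_right True
      using xlnx_lim by simp
  next
    case False
    then have "u > 0" using that by simp
    then have "((\<lambda>u. u * ln u) has_real_derivative (ln u + 1)) (at u)"
      by (auto intro!: derivative_eq_intros)
    then have "isCont (\<lambda>u. u * ln u) u" by (rule DERIV_isCont)
    then show ?thesis by (rule continuous_at_imp_continuous_at_within)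
  qed
  show ?thesis unfolding continuous_on_eq_continuous_within
    using * by simp
qed

lemma lfun_alt: "lfun a b = b - a * ln b + a * (ln a - 1)"
  unfolding lfun_def Kfun_def by simp

lemma deriv_helper:
  fixes f g :: "real \<Rightarrow> real"
  assumes df: "(f has_real_derivative a) (at u)" and dg: "(g has_real_derivative b) (at u)" and "f u > 0" "g u > 0"
  shows "((\<lambda>t. f t * ln (f t) - f t * ln (g t)) has_real_derivative
         a * ln (f u) + f u * (a / f u) - (a * ln (g u) + f u * (b / g u))) (at u)"
  using assms by (auto intro!: derivative_eq_intros simp: field_simps)

theorem theorem1:
  fixes Q :: "real \<Rightarrow> 'x::finite \<Rightarrow> 'x \<Rightarrow> real"
    and p :: "real \<Rightarrow> 'x \<Rightarrow> real"
    and p\<theta> :: "real \<Rightarrow> 'x \<Rightarrow> real"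
    and s :: "'x \<Rightarrow> real \<Rightarrow> 'x \<Rightarrow> real"
    and pr :: "'x \<Rightarrow> real"
  assumes Q_offdiag: "\<And>t x y. t \<in> {0..1} \<Longrightarrow> x \<noteq> y \<Longrightarrow> Q t x y \<ge> 0"
    and Q_cols: "\<And>t y. t \<in> {0..1} \<Longrightarrow> (\<Sum>x\<in>UNIV. Q t x y) = 0"
    and Q_cont: "\<And>x y. continuous_on {0..1} (\<lambda>t. Q t x y)"
    and p0_nonneg: "\<And>x. p 0 x \<ge> 0"
    and p0_sum: "(\<Sum>x\<in>UNIV. p 0 x) = 1"
    and p_ode: "\<And>t x. t \<in> {0..1} \<Longrightarrow>
        ((\<lambda>\<tau>. p \<tau> x) has_real_derivative (\<Sum>y\<in>UNIV. Q t x y * p t y)) (at t within {0..1})"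
    and p_pos: "\<And>t x. t \<in> {0<..1} \<Longrightarrow> p t x > 0"
    and s_pos: "\<And>x t y. t \<in> {0..1} \<Longrightarrow> x \<noteq> y \<Longrightarrow> s x t y > 0"
    and s_cont: "\<And>x y. continuous_on {0..1} (\<lambda>t. s x t y)"
    and pr_pos: "\<And>x. pr x > 0"
    and pr_sum: "(\<Sum>x\<in>UNIV. pr x) = 1"
    and p\<theta>_init: "p\<theta> 1 = pr"
    and p\<theta>_ode: "\<And>t x. t \<in> {0..1} \<Longrightarrow>
        ((\<lambda>\<tau>. p\<theta> \<tau> x) has_real_derivative
           - ((\<Sum>y\<in>UNIV - {x}. p\<theta> t y * (Q t y x * s y t x))
              - p\<theta> t x * (\<Sum>y\<in>UNIV - {x}. Q t x y * s x t y)))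
         (at t within {0..1})"
    and integrable: "score_entropy_integrand Q p s integrable_on {0..1}"
  shows "KL (p 0) (p\<theta> 0) \<le> integral {0..1} (score_entropy_integrand Q p s) + KL (p 1) pr"
proof -
  have qpos: "\<And>t x. t \<in> {0..1} \<Longrightarrow> p\<theta> t x > 0"
    by (rule ptheta_pos[OF Q_offdiag Q_cont s_pos s_cont pr_pos p\<theta>_init p\<theta>_ode]) auto
  have pnn: "p t x \<ge> 0" if "t \<in> {0..1}" for t x
  proof (cases "t = 0")
    case True then show ?thesis using p0_nonneg by simp
  next
    case False then show ?thesis using p_pos[of t x] that by auto
  qed
  have pcont: "continuous_on {0..1} (\<lambda>t. p t x)" for x
    using p_ode by (rule DERIV_continuous_on)
  have qcont: "continuous_on {0..1} (\<lambda>t. p\<theta> t x)" for x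
    using p\<theta>_ode by (rule DERIV_continuous_on)
  define I where "I = score_entropy_integrand Q p s"
  define F where "F t = (\<Sum>x\<in>UNIV. p t x * ln (p t x) - p t x * ln (p\<theta> t x))" for t
  define H where "H t = F t - integral {t..1} I" for t
  have KLF: "KL (p t) (p\<theta> t) = F t" if "t \<in> {0..1}" for t
    unfolding KL_def F_def
  proof (intro sum.cong refl)
    fix x
    show "(if p t x = 0 then 0 else p t x * ln (p t x / p\<theta> t x)) = p t x * ln (p t x) - p t x * ln (p\<theta> t x)"
      using pnn[OF that, of x] qpos[OF that, of x] by (auto simp: ln_div right_diff_distrib)
  qed
  have k: "continuous_on {0..1} (\<lambda>t. p t x * ln (p t x))" for x
    by (rule continuous_on_compose2[OF xlnx_cont pcont]) (auto intro: pnn)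
  have k2: "continuous_on {0..1} (\<lambda>t. p t x * ln (p\<theta> t x))" for x
    using qpos by (intro continuous_on_mult pcont continuous_on_ln qcont) (auto simp: less_imp_neq[symmetric])
  have Fcont: "continuous_on {0..1} F"
    unfolding F_def by (intro continuous_on_sum continuous_on_diff k k2)
  have Icont: "continuous_on {a..1} I" if "a > 0" for a
  proof -
    have "continuous_on {a..1} (\<lambda>t. \<Sum>x\<in>UNIV. p t x * (\<Sum>y\<in>UNIV - {x}. Q t x y *
       (s x t y - p t y / p t x * ln (s x t y) + p t y / p t x * (ln (p t y / p t x) - 1))))"
    proof -
      have pa: "p t x \<noteq> 0" if "t \<in> {a..1}" for t x
        using p_pos[of t x] that \<open>a > 0\<close> by auto
      have sa: "s x t y \<noteq> 0" if "t \<in> {a..1}" "y \<in> UNIV - {x}" for t x y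
        using s_pos[of t x y] that \<open>a > 0\<close> by auto
      have cp: "continuous_on {a..1} (\<lambda>t. p t x)" for x
        by (rule continuous_on_subset[OF pcont]) (use \<open>a > 0\<close> in auto)
      have cQ: "continuous_on {a..1} (\<lambda>t. Q t x y)" for x y
        by (rule continuous_on_subset[OF Q_cont]) (use \<open>a > 0\<close> in auto)
      have cs: "continuous_on {a..1} (\<lambda>t. s x t y)" for x y
        by (rule continuous_on_subset[OF s_cont]) (use \<open>a > 0\<close> in auto)
      have cpq: "continuous_on {a..1} (\<lambda>t. p t y / p t x)" for x y
        by (rule continuous_on_divide[OF cp cp]) (auto simp: pa)
      have inner: "continuous_on {a..1} (\<lambda>t. Q t x y *
       (s x t y - p t y / p t x * ln (s x t y) + p t y / p t x * (ln (p t y / p t x) - 1)))"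
        if "y \<in> UNIV - {x}" for x y
      proof -
        have l1: "continuous_on {a..1} (\<lambda>t. ln (s x t y))"
          by (rule continuous_on_ln[OF cs]) (use sa that in auto)
        have l2: "continuous_on {a..1} (\<lambda>t. ln (p t y / p t x))"
          by (rule continuous_on_ln[OF cpq]) (auto simp: pa)
        show ?thesis
          by (intro continuous_on_mult continuous_on_add continuous_on_diff cQ cs cpq l1 l2 continuous_on_const)
      qed
      show ?thesis
        by (intro continuous_on_sum continuous_on_mult cp inner)
    qed
    then show ?thesis unfolding I_def score_entropy_integrand_def lfun_alt .
  qed
  have H0: "H 0 \<le> H 1"
  proof (rule DERIV_nonneg_imp_increasing_open[of 0 1 H])
    show "continuous_on {0..1} H"
      unfolding H_def using integrable unfolding I_def[symmetric]
      by (intro continuous_on_diff Fcont indefinite_integral_continuous_1')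
    fix u :: real assume u: "0 < u" "u < 1"
    then have u01: "u \<in> {0..1}" by simp
    define dp where "dp x = (\<Sum>y\<in>UNIV. Q u x y * p u y)" for x
    define dq where "dq x = - ((\<Sum>y\<in>UNIV - {x}. p\<theta> u y * (Q u y x * s y u x))
              - p\<theta> u x * (\<Sum>y\<in>UNIV - {x}. Q u x y * s x u y))" for x
    have pu: "p u x > 0" for x using p_pos u by simp
    have qu: "p\<theta> u x > 0" for x using qpos u01 by simp
    have dpx: "((\<lambda>t. p t x) has_real_derivative dp x) (at u)" for x
      using p_ode[OF u01, of x] u unfolding dp_def by (simp add: at_within_Icc_at)
    have dqx: "((\<lambda>t. p\<theta> t x) has_real_derivative dq x) (at u)" for x
      using p\<theta>_ode[OF u01, of x] u unfolding dq_def by (simp add: at_within_Icc_at)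
    have dF: "(F has_real_derivative (\<Sum>x\<in>UNIV. dp x * (ln (p u x) - ln (p\<theta> u x)) + p u x * (dp x / p u x - dq x / p\<theta> u x))) (at u)"
      unfolding F_def
    proof (rule DERIV_sum)
      fix x
      have "((\<lambda>t. p t x * ln (p t x) - p t x * ln (p\<theta> t x)) has_real_derivative
         dp x * ln (p u x) + p u x * (dp x / p u x) - (dp x * ln (p\<theta> u x) + p u x * (dq x / p\<theta> u x))) (at u)"
        by (rule deriv_helper[OF dpx dqx pu qu])
      then show "((\<lambda>t. p t x * ln (p t x) - p t x * ln (p\<theta> t x)) has_real_derivative
         dp x * (ln (p u x) - ln (p\<theta> u x)) + p u x * (dp x / p u x - dq x / p\<theta> u x)) (at u)"
        by (rule DERIV_cong) (simp add: algebra_simps)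
    qed
    have dI: "((\<lambda>t. integral {t..1} I) has_real_derivative - I u) (at u)"
    proof -
      have "((\<lambda>t. integral {t..1} I) has_real_derivative - I u) (at u within {u/2..1})"
        using Icont[of "u/2"] u by (intro integral_has_real_derivative') auto
      then show ?thesis using u by (simp add: at_within_Icc_at)
    qed
    have dH: "(H has_real_derivative (\<Sum>x\<in>UNIV. dp x * (ln (p u x) - ln (p\<theta> u x)) + p u x * (dp x / p u x - dq x / p\<theta> u x)) - - I u) (at u)"
      unfolding H_def by (intro DERIV_diff dF dI)
    have K: "0 \<le> (\<Sum>x\<in>UNIV. dp x * (ln (p u x) - ln (p\<theta> u x)) + p u x * (dp x / p u x - dq x / p\<theta> u x)) + I u"
      unfolding I_def score_entropy_integrand_def dp_def dq_def
      by (rule key_ineq[of "Q u" "p u" "p\<theta> u" "\<lambda>x y. s x u y"])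
         (auto intro: Q_offdiag[OF u01] Q_cols[OF u01] pu qu s_pos[OF u01])
    have "0 \<le> (\<Sum>x\<in>UNIV. dp x * (ln (p u x) - ln (p\<theta> u x)) + p u x * (dp x / p u x - dq x / p\<theta> u x)) - - I u"
      using K by linarith
    with dH show "\<exists>y. (H has_real_derivative y) (at u) \<and> 0 \<le> y" by blast
  qed simp
  have "H 0 = KL (p 0) (p\<theta> 0) - integral {0..1} I" unfolding H_def using KLF[of 0] by simp
  moreover have "H 1 = KL (p 1) pr" unfolding H_def using KLF[of 1] p\<theta>_init by simp
  ultimately show ?thesis using H0 unfolding I_def by simp
qed

end
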